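(* Let $\Lambda$ be a level-sentence set for a language $\mathcal L$. Let $A$ be a set of first-order $\mathcal L$-sentences and $\phi$ an $\mathcal L$-sentence such that $A\not\vdash\phi\leftrightarrow\psi$ for every $\psi\in\neg\Lambda$. Then there are complete consistent theories $T^+\supseteq A\cup\{\phi\}$ and $T^-\supseteq A\cup\{\neg\phi\}$ such that $\Lambda\cap T^-\subseteq\Lambda\cap T^+$. Furthermore, if $T$ is any theory consistent with $A\cup\{\phi\}\cup\mathrm{Th}_\Lambda(A\cup\{\neg\phi\})$, then $T^+$ can be chosen to contain $T$.
   Context: A level-sentence set for $\mathcal L$ is either the set of all $\exists_n$-sentences or the set of all $\forall_n$-sentences of $\mathcal L$, for some $n$ (prenex sentences with $n$ alternating quantifier blocks starting with $\exists$, resp. $\forall$). For a level-sentence set $\Lambda$, $\neg\Lambda$ is the set of sentences logically equivalent to the negation of a sentence in $\Lambda$. For a theory $T$, $\mathrm{Th}_\Lambda(T)=\Lambda\cap\overline T$, where $\overline T$ is the deductive closure of $T$. Complete theories are taken deductively closed. *)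

theory Defs
  imports Main
begin

text \<open>'f: function/constant symbols, 'p: relation symbols of the language L.
Equality is a logical symbol.\<close>

datatype 'f trm = Var nat | Fun 'f "'f trm list"

datatype ('f, 'p) fm =
    Bot
  | Atom 'p "'f trm list"
  | Eq "'f trm" "'f trm"
  | Neg "('f, 'p) fm"
  | Conj "('f, 'p) fm" "('f, 'p) fm"
  | Disj "('f, 'p) fm" "('f, 'p) fm"
  | Imp "('f, 'p) fm" "('f, 'p) fm"
  | Ex "('f, 'p) fm"
  | All "('f, 'p) fm"

definition Iff :: "('f, 'p) fm \<Rightarrow> ('f, 'p) fm \<Rightarrow> ('f, 'p) fm" where
  "Iff a b = Conj (Imp a b) (Imp b a)"

fun liftt :: "nat \<Rightarrow> 'f trm \<Rightarrow> 'f trm" where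
  "liftt k (Var i) = (if i < k then Var i else Var (Suc i))"
| "liftt k (Fun f ts) = Fun f (map (liftt k) ts)"

fun liftf :: "nat \<Rightarrow> ('f, 'p) fm \<Rightarrow> ('f, 'p) fm" where
  "liftf k Bot = Bot"
| "liftf k (Atom p ts) = Atom p (map (liftt k) ts)"
| "liftf k (Eq s t) = Eq (liftt k s) (liftt k t)"
| "liftf k (Neg a) = Neg (liftf k a)"
| "liftf k (Conj a b) = Conj (liftf k a) (liftf k b)"
| "liftf k (Disj a b) = Disj (liftf k a) (liftf k b)"
| "liftf k (Imp a b) = Imp (liftf k a) (liftf k b)"
| "liftf k (Ex a) = Ex (liftf (Suc k) a)"
| "liftf k (All a) = All (liftf (Suc k) a)"

fun substt :: "nat \<Rightarrow> 'f trm \<Rightarrow> 'f trm \<Rightarrow> 'f trm" where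
  "substt k s (Var i) = (if i < k then Var i else if i = k then s else Var (i - 1))"
| "substt k s (Fun f ts) = Fun f (map (substt k s) ts)"

fun substf :: "nat \<Rightarrow> 'f trm \<Rightarrow> ('f, 'p) fm \<Rightarrow> ('f, 'p) fm" where
  "substf k s Bot = Bot"
| "substf k s (Atom p ts) = Atom p (map (substt k s) ts)"
| "substf k s (Eq t u) = Eq (substt k s t) (substt k s u)"
| "substf k s (Neg a) = Neg (substf k s a)"
| "substf k s (Conj a b) = Conj (substf k s a) (substf k s b)"
| "substf k s (Disj a b) = Disj (substf k s a) (substf k s b)"
| "substf k s (Imp a b) = Imp (substf k s a) (substf k s b)"
| "substf k s (Ex a) = Ex (substf (Suc k) (liftt 0 s) a)"
| "substf k s (All a) = All (substf (Suc k) (liftt 0 s) a)"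

fun closedt :: "nat \<Rightarrow> 'f trm \<Rightarrow> bool" where
  "closedt k (Var i) = (i < k)"
| "closedt k (Fun f ts) = (\<forall>t\<in>set ts. closedt k t)"

fun closedf :: "nat \<Rightarrow> ('f, 'p) fm \<Rightarrow> bool" where
  "closedf k Bot = True"
| "closedf k (Atom p ts) = (\<forall>t\<in>set ts. closedt k t)"
| "closedf k (Eq s t) = (closedt k s \<and> closedt k t)"
| "closedf k (Neg a) = closedf k a"
| "closedf k (Conj a b) = (closedf k a \<and> closedf k b)"
| "closedf k (Disj a b) = (closedf k a \<and> closedf k b)"
| "closedf k (Imp a b) = (closedf k a \<and> closedf k b)"
| "closedf k (Ex a) = closedf (Suc k) a"
| "closedf k (All a) = closedf (Suc k) a"

definition sentence :: "('f, 'p) fm \<Rightarrow> bool" where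
  "sentence a = closedf 0 a"

inductive nd :: "('f, 'p) fm list \<Rightarrow> ('f, 'p) fm \<Rightarrow> bool" (infix "\<turnstile>\<^sub>L" 50) where
  Assum: "a \<in> set G \<Longrightarrow> G \<turnstile>\<^sub>L a"
| BotE: "G \<turnstile>\<^sub>L Bot \<Longrightarrow> G \<turnstile>\<^sub>L a"
| Classical: "Neg a # G \<turnstile>\<^sub>L Bot \<Longrightarrow> G \<turnstile>\<^sub>L a"
| NegI: "a # G \<turnstile>\<^sub>L Bot \<Longrightarrow> G \<turnstile>\<^sub>L Neg a"
| NegE: "G \<turnstile>\<^sub>L Neg a \<Longrightarrow> G \<turnstile>\<^sub>L a \<Longrightarrow> G \<turnstile>\<^sub>L Bot"
| ConjI: "G \<turnstile>\<^sub>L a \<Longrightarrow> G \<turnstile>\<^sub>L b \<Longrightarrow> G \<turnstile>\<^sub>L Conj a b"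
| ConjE1: "G \<turnstile>\<^sub>L Conj a b \<Longrightarrow> G \<turnstile>\<^sub>L a"
| ConjE2: "G \<turnstile>\<^sub>L Conj a b \<Longrightarrow> G \<turnstile>\<^sub>L b"
| DisjI1: "G \<turnstile>\<^sub>L a \<Longrightarrow> G \<turnstile>\<^sub>L Disj a b"
| DisjI2: "G \<turnstile>\<^sub>L b \<Longrightarrow> G \<turnstile>\<^sub>L Disj a b"
| DisjE: "G \<turnstile>\<^sub>L Disj a b \<Longrightarrow> a # G \<turnstile>\<^sub>L c \<Longrightarrow> b # G \<turnstile>\<^sub>L c \<Longrightarrow> G \<turnstile>\<^sub>L c"
| ImpI: "a # G \<turnstile>\<^sub>L b \<Longrightarrow> G \<turnstile>\<^sub>L Imp a b"
| ImpE: "G \<turnstile>\<^sub>L Imp a b \<Longrightarrow> G \<turnstile>\<^sub>L a \<Longrightarrow> G \<turnstile>\<^sub>L b"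
| AllI: "map (liftf 0) G \<turnstile>\<^sub>L a \<Longrightarrow> G \<turnstile>\<^sub>L All a"
| AllE: "G \<turnstile>\<^sub>L All a \<Longrightarrow> G \<turnstile>\<^sub>L substf 0 t a"
| ExI: "G \<turnstile>\<^sub>L substf 0 t a \<Longrightarrow> G \<turnstile>\<^sub>L Ex a"
| ExE: "G \<turnstile>\<^sub>L Ex a \<Longrightarrow> a # map (liftf 0) G \<turnstile>\<^sub>L liftf 0 b \<Longrightarrow> G \<turnstile>\<^sub>L b"
| Refl: "G \<turnstile>\<^sub>L Eq t t"
| Subst: "G \<turnstile>\<^sub>L Eq s t \<Longrightarrow> G \<turnstile>\<^sub>L substf 0 s a \<Longrightarrow> G \<turnstile>\<^sub>L substf 0 t a"

definition proves :: "('f, 'p) fm set \<Rightarrow> ('f, 'p) fm \<Rightarrow> bool" (infix "\<turnstile>" 50) where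
  "A \<turnstile> a \<longleftrightarrow> (\<exists>G. set G \<subseteq> A \<and> G \<turnstile>\<^sub>L a)"

definition ded_closure :: "('f, 'p) fm set \<Rightarrow> ('f, 'p) fm set" where
  "ded_closure T = {a. sentence a \<and> T \<turnstile> a}"

definition consistent :: "('f, 'p) fm set \<Rightarrow> bool" where
  "consistent T \<longleftrightarrow> \<not> T \<turnstile> Bot"

definition is_theory :: "('f, 'p) fm set \<Rightarrow> bool" where
  "is_theory T \<longleftrightarrow> (\<forall>a\<in>T. sentence a)"

definition complete_consistent_theory :: "('f, 'p) fm set \<Rightarrow> bool" where
  "complete_consistent_theory T \<longleftrightarrow>
     is_theory T \<and> ded_closure T = T \<and> consistent T \<and>
     (\<forall>a. sentence a \<longrightarrow> a \<in> T \<or> Neg a \<in> T)"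

fun qfree :: "('f, 'p) fm \<Rightarrow> bool" where
  "qfree (Ex a) = False"
| "qfree (All a) = False"
| "qfree (Neg a) = qfree a"
| "qfree (Conj a b) = (qfree a \<and> qfree b)"
| "qfree (Disj a b) = (qfree a \<and> qfree b)"
| "qfree (Imp a b) = (qfree a \<and> qfree b)"
| "qfree _ = True"

text \<open>level True n a: a is an \<exists>_n prenex formula; level False n a: a is \<forall>_n.
 Quantifier blocks may be empty (standard convention).\<close>
fun level :: "bool \<Rightarrow> nat \<Rightarrow> ('f, 'p) fm \<Rightarrow> bool" where
  "level b 0 a = qfree a"
| "level True (Suc n) a = (\<exists>k c. a = (Ex ^^ k) c \<and> level False n c)"
| "level False (Suc n) a = (\<exists>k c. a = (All ^^ k) c \<and> level True n c)"

definition level_sentences :: "bool \<Rightarrow> nat \<Rightarrow> ('f, 'p) fm set" where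
  "level_sentences b n = {a. sentence a \<and> level b n a}"

definition neg_set :: "('f, 'p) fm set \<Rightarrow> ('f, 'p) fm set" where
  "neg_set L = {c. sentence c \<and> (\<exists>a\<in>L. {} \<turnstile> Iff c (Neg a))}"

definition Th :: "('f, 'p) fm set \<Rightarrow> ('f, 'p) fm set \<Rightarrow> ('f, 'p) fm set" where
  "Th L T = L \<inter> ded_closure T"

end

theory Submission
  imports Defs
begin


lemma weaken: "nd G a \<Longrightarrow> set G \<subseteq> set H \<Longrightarrow> nd H a"
proof (induction G a arbitrary: H rule: nd.induct)
  case (AllI G a) then show ?case by (metis image_mono list.set_map nd.AllI)
next
  case (ExE G a b) then show ?case
  proof -
    have "set (a # map (liftf 0) G) \<subseteq> set (a # map (liftf 0) H)" using ExE.prems by auto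
    then show ?thesis using ExE by (blast intro: nd.ExE)
  qed
next
  case (Classical a G) show ?case by (rule nd.Classical) (use Classical.IH[of "Neg a # H"] Classical.prems in auto)
next
  case (NegI a G) show ?case by (rule nd.NegI) (use NegI.IH[of "a # H"] NegI.prems in auto)
next
  case (NegE G a) then show ?case by (blast intro: nd.NegE)
next
  case (DisjE G a b c) show ?case by (rule nd.DisjE[of _ a b]) (use DisjE.IH(1)[of H] DisjE.IH(2)[of "a # H"] DisjE.IH(3)[of "b # H"] DisjE.prems in auto)
next
  case (ImpI a G b) show ?case by (rule nd.ImpI) (use ImpI.IH[of "a # H"] ImpI.prems in auto)
next
  case (Subst G s t a) then show ?case by (blast intro: nd.Subst)
qed (auto intro: nd.intros)

lemma cut_all: "nd G a \<Longrightarrow> \<forall>g\<in>set G. nd H g \<Longrightarrow> nd H a"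
proof (induction G arbitrary: a)
  case Nil then show ?case using weaken by fastforce
next
  case (Cons g G)
  have "nd G (Imp g a)" using Cons.prems(1) by (rule ImpI)
  then have "nd H (Imp g a)" using Cons by auto
  then show ?case using Cons.prems(2) by (auto intro: ImpE)
qed

lemma cut1: "nd [x] a \<Longrightarrow> nd H x \<Longrightarrow> nd H a"
  using cut_all by fastforce

definition eqv :: "('f,'p) fm \<Rightarrow> ('f,'p) fm \<Rightarrow> bool" where
  "eqv a b \<longleftrightarrow> (\<forall>G. nd G a = nd G b)"

lemma equivI: "nd [a] b \<Longrightarrow> nd [b] a \<Longrightarrow> eqv a b"
  unfolding eqv_def using cut1 by blast

lemma equiv_refl: "eqv a a" by (simp add: eqv_def)
lemma equiv_sym: "eqv a b \<Longrightarrow> eqv b a" by (simp add: eqv_def)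
lemma equiv_trans: "eqv a b \<Longrightarrow> eqv b c \<Longrightarrow> eqv a c" by (simp add: eqv_def)
lemma equivD: "eqv a b \<Longrightarrow> nd G a \<Longrightarrow> nd G b" by (simp add: eqv_def)

lemma substt_lift_var: "substt k (Var k) (liftt (Suc k) t) = t"
  by (induction t) (auto simp: map_idI)
lemma substf_lift_var: "substf k (Var k) (liftf (Suc k) a) = a"
  by (induction a arbitrary: k) (auto simp: substt_lift_var map_idI)
lemma substt_lift: "substt k s (liftt k t) = t"
  by (induction t) (auto simp: map_idI)
lemma substf_lift: "substf k s (liftf k a) = a"
  by (induction a arbitrary: k s) (auto simp: substt_lift map_idI)

lemma substf_lift_var0[simp]: "substf 0 (Var 0) (liftf (Suc 0) a) = a"
  by (rule substf_lift_var)
declare substf_lift[simp]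

lemma AssumH: "nd (a # G) a" by (rule Assum) simp

lemma cong_Neg: "eqv a b \<Longrightarrow> eqv (Neg a) (Neg b)"
proof -
  have *: "nd [Neg a] (Neg b)" if "eqv a b" for a b :: "('f,'p) fm"
    apply (rule NegI)
    apply (rule NegE[of _ a])
     apply (rule Assum, simp)
    using equivD[OF equiv_sym[OF that] AssumH] by blast
  assume "eqv a b" then show ?thesis using * equiv_sym by (blast intro: equivI)
qed

lemma cong_Conj: "eqv a b \<Longrightarrow> eqv (Conj a c) (Conj b c)"
  by (rule equivI; rule ConjI; metis ConjE1 ConjE2 AssumH equivD equiv_sym)
lemma cong_Disj: "eqv a b \<Longrightarrow> eqv (Disj a c) (Disj b c)"
proof (rule equivI)
  assume e: "eqv a b"
  show "nd [Disj a c] (Disj b c)"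
    by (rule DisjE[OF AssumH]) (metis DisjI1 DisjI2 AssumH equivD e)+
  show "nd [Disj b c] (Disj a c)"
    by (rule DisjE[OF AssumH]) (metis DisjI1 DisjI2 AssumH equivD equiv_sym e)+
qed

lemma cong_Ex: "eqv a b \<Longrightarrow> eqv (Ex a) (Ex b)"
proof -
  have *: "nd [Ex a] (Ex b)" if e: "eqv a b" for a b :: "('f,'p) fm"
  proof (rule ExE[OF AssumH])
    show "nd (a # map (liftf 0) [Ex a]) (liftf 0 (Ex b))"
      using ExI[where t="Var 0" and a="liftf 1 b"] equivD[OF e AssumH] by simp
  qed
  assume "eqv a b" then show ?thesis using * equiv_sym by (blast intro: equivI)
qed

lemma cong_All: "eqv a b \<Longrightarrow> eqv (All a) (All b)"
proof -
  have *: "nd [All a] (All b)" if e: "eqv a b" for a b :: "('f,'p) fm"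
  proof (rule AllI)
    have "nd [All (liftf 1 a)] a" using AllE[OF AssumH, where t="Var 0" and a="liftf 1 a"] by simp
    then show "nd (map (liftf 0) [All a]) b" using equivD[OF e] by simp
  qed
  assume "eqv a b" then show ?thesis using * equiv_sym by (blast intro: equivI)
qed

lemma comm_Conj: "eqv (Conj a c) (Conj c a)"
  by (rule equivI; metis ConjI ConjE1 ConjE2 AssumH)
lemma comm_Disj: "eqv (Disj a c) (Disj c a)"
  by (rule equivI; rule DisjE[OF AssumH]; metis DisjI1 DisjI2 AssumH)





lemma AssumI: "a \<in> set G \<Longrightarrow> nd G a" by (rule Assum)

lemma P1: "eqv (Conj (Ex a) c) (Ex (Conj a (liftf 0 c)))"
proof (rule equivI)
  show "nd [Conj (Ex a) c] (Ex (Conj a (liftf 0 c)))"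
  proof (rule ExE[OF ConjE1[OF AssumH]])
    have "nd (a # [Conj (Ex (liftf 1 a)) (liftf 0 c)]) (Conj a (liftf 0 c))"
      by (rule ConjI, rule AssumH, rule ConjE2[OF AssumI, of "Ex (liftf 1 a)" "liftf 0 c"]) simp
    then show "nd (a # map (liftf 0) [Conj (Ex a) c]) (liftf 0 (Ex (Conj a (liftf 0 c))))"
      using ExI[where t="Var 0" and a="Conj (liftf 1 a) (liftf 1 (liftf 0 c))"] by simp
  qed
  show "nd [Ex (Conj a (liftf 0 c))] (Conj (Ex a) c)"
  proof (rule ConjI)
    show "nd [Ex (Conj a (liftf 0 c))] (Ex a)"
    proof (rule ExE[OF AssumH])
      show "nd (Conj a (liftf 0 c) # map (liftf 0) [Ex (Conj a (liftf 0 c))]) (liftf 0 (Ex a))"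
        using ExI[where t="Var 0" and a="liftf 1 a"] ConjE1[OF AssumH] by (simp, blast)
    qed
    show "nd [Ex (Conj a (liftf 0 c))] c"
      by (rule ExE[OF AssumH], rule ConjE2[OF AssumH])
  qed
qed

lemma P2: "eqv (Disj (Ex a) c) (Ex (Disj a (liftf 0 c)))"
proof (rule equivI)
  show "nd [Disj (Ex a) c] (Ex (Disj a (liftf 0 c)))"
  proof (rule DisjE[OF AssumH])
    show "nd [Ex a, Disj (Ex a) c] (Ex (Disj a (liftf 0 c)))"
    proof (rule ExE[OF AssumH])
      have "nd (a # map (liftf 0) [Ex a, Disj (Ex a) c]) (Disj a (liftf 0 c))"
        by (rule DisjI1, rule AssumH)
      then show "nd (a # map (liftf 0) [Ex a, Disj (Ex a) c]) (liftf 0 (Ex (Disj a (liftf 0 c))))"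
        using ExI[where t="Var 0" and a="Disj (liftf 1 a) (liftf 1 (liftf 0 c))"] by simp
    qed
    show "nd [c, Disj (Ex a) c] (Ex (Disj a (liftf 0 c)))"
      using ExI[where t="Var 0" and a="Disj a (liftf 0 c)"] DisjI2[OF AssumH, of c _ "substf 0 (Var 0) a"] by simp
  qed
  show "nd [Ex (Disj a (liftf 0 c))] (Disj (Ex a) c)"
  proof (rule ExE[OF AssumH])
    show "nd (Disj a (liftf 0 c) # map (liftf 0) [Ex (Disj a (liftf 0 c))]) (liftf 0 (Disj (Ex a) c))"
    proof -
      let ?G = "Disj a (liftf 0 c) # map (liftf 0) [Ex (Disj a (liftf 0 c))]"
      have "nd ?G (Disj (Ex (liftf 1 a)) (liftf 0 c))"
      proof (rule DisjE[OF AssumH])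
        show "nd (a # ?G) (Disj (Ex (liftf 1 a)) (liftf 0 c))"
          apply (rule DisjI1)
          using ExI[where t="Var 0" and a="liftf 1 a", of "a # ?G"] AssumH[of a ?G] by simp
        show "nd (liftf 0 c # ?G) (Disj (Ex (liftf 1 a)) (liftf 0 c))"
          by (rule DisjI2, rule AssumH)
      qed
      then show ?thesis by simp
    qed
  qed
qed

lemma P3: "eqv (Conj (All a) c) (All (Conj a (liftf 0 c)))"
proof (rule equivI)
  show "nd [Conj (All a) c] (All (Conj a (liftf 0 c)))"
  proof (rule AllI)
    have "nd [Conj (All (liftf 1 a)) (liftf 0 c)] (Conj a (liftf 0 c))"
      apply (rule ConjI)
      using AllE[OF ConjE1[OF AssumH], where t="Var 0" and a="liftf 1 a"] ConjE2[OF AssumH] by simp_all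
    then show "nd (map (liftf 0) [Conj (All a) c]) (Conj a (liftf 0 c))" by simp
  qed
  show "nd [All (Conj a (liftf 0 c))] (Conj (All a) c)"
  proof (rule ConjI)
    show "nd [All (Conj a (liftf 0 c))] (All a)"
    proof (rule AllI)
      show "nd (map (liftf 0) [All (Conj a (liftf 0 c))]) a"
        using ConjE1 AllE[OF AssumH, where t="Var 0" and a="Conj (liftf 1 a) (liftf 1 (liftf 0 c))"] by (simp, blast)
    qed
    show "nd [All (Conj a (liftf 0 c))] c"
      using ConjE2 AllE[OF AssumH, where t="Var 0" and a="Conj a (liftf 0 c)"] by (simp, blast)
  qed
qed

lemma P4: "eqv (Disj (All a) c) (All (Disj a (liftf 0 c)))"
proof (rule equivI)
  show "nd [Disj (All a) c] (All (Disj a (liftf 0 c)))"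
  proof (rule AllI)
    have "nd [Disj (All (liftf 1 a)) (liftf 0 c)] (Disj a (liftf 0 c))"
    proof (rule DisjE[OF AssumH])
      show "nd [All (liftf 1 a), Disj (All (liftf 1 a)) (liftf 0 c)] (Disj a (liftf 0 c))"
        apply (rule DisjI1)
        using AllE[OF AssumH, where t="Var 0" and a="liftf 1 a"] by simp
      show "nd [liftf 0 c, Disj (All (liftf 1 a)) (liftf 0 c)] (Disj a (liftf 0 c))"
        by (rule DisjI2, rule AssumH)
    qed
    then show "nd (map (liftf 0) [Disj (All a) c]) (Disj a (liftf 0 c))" by simp
  qed
  show "nd [All (Disj a (liftf 0 c))] (Disj (All a) c)"
  proof (rule Classical)
    let ?H = "[Neg (Disj (All a) c), All (Disj a (liftf 0 c))]"
    have "nd ?H (All a)"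
    proof (rule AllI)
      let ?H' = "[Neg (Disj (All (liftf 1 a)) (liftf 0 c)), All (Disj (liftf 1 a) (liftf 1 (liftf 0 c)))]"
      have d: "nd ?H' (Disj a (liftf 0 c))"
        using AllE[OF AssumI, of "Disj (liftf 1 a) (liftf 1 (liftf 0 c))" ?H' "Var 0"] by simp
      have "nd ?H' a"
      proof (rule DisjE[OF d])
        show "nd (a # ?H') a" by (rule AssumH)
        show "nd (liftf 0 c # ?H') a"
          by (rule BotE, rule NegE[OF AssumI, of "Disj (All (liftf 1 a)) (liftf 0 c)"], simp, rule DisjI2, rule AssumH)
      qed
      then show "nd (map (liftf 0) ?H) a" by simp
    qed
    then show "nd (Neg (Disj (All a) c) # [All (Disj a (liftf 0 c))]) Bot"
      by (intro NegE[OF AssumH] DisjI1) simp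
  qed
qed




lemma lift_Exk: "liftf j ((Ex ^^ k) c) = (Ex ^^ k) (liftf (j + k) c)"
  by (induction k arbitrary: j) auto
lemma lift_Allk: "liftf j ((All ^^ k) c) = (All ^^ k) (liftf (j + k) c)"
  by (induction k arbitrary: j) auto
lemma qfree_lift: "qfree (liftf j a) = qfree a"
  by (induction a arbitrary: j) auto

lemma level_lift: "level b n a \<Longrightarrow> level b n (liftf j a)"
proof (induction n arbitrary: b a j)
  case 0 then show ?case by (simp add: qfree_lift)
next
  case (Suc n)
  show ?case
  proof (cases b)
    case True
    with Suc.prems obtain k c where "a = (Ex ^^ k) c" "level False n c" by auto
    then show ?thesis using True Suc.IH[of False c "j + k"] by (auto simp: lift_Exk)
  next
    case False
    with Suc.prems obtain k c where "a = (All ^^ k) c" "level True n c" by auto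
    then show ?thesis using False Suc.IH[of True c "j + k"] by (auto simp: lift_Allk)
  qed
qed

lemma level_liftk: "level b n a \<Longrightarrow> level b n ((liftf 0 ^^ k) a)"
  by (induction k) (auto intro: level_lift)

lemma closedt_lift: "closedt j t \<Longrightarrow> closedt (Suc j) (liftt i t)"
  by (induction t) auto
lemma closedf_lift: "closedf j a \<Longrightarrow> closedf (Suc j) (liftf i a)"
  by (induction a arbitrary: i j) (auto simp: closedt_lift)
lemma closedf_liftk: "closedf j a \<Longrightarrow> closedf (j + k) ((liftf 0 ^^ k) a)"
  by (induction k) (auto intro: closedf_lift)

lemma closed_Exk: "closedf j ((Ex ^^ k) c) = closedf (j + k) c"
  by (induction k arbitrary: j) auto
lemma closed_Allk: "closedf j ((All ^^ k) c) = closedf (j + k) c"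
  by (induction k arbitrary: j) auto

lemma qfree_level: "qfree a \<Longrightarrow> level b n a"
proof (induction n arbitrary: b)
  case 0 then show ?case by simp
next
  case (Suc n) then show ?case by (cases b) (simp_all add: exI[of _ 0])
qed

declare equiv_trans[trans]

lemma congQk:
  fixes Q :: "('f,'p) fm \<Rightarrow> ('f,'p) fm" and a a' :: "('f,'p) fm"
  assumes congQ: "\<And>a a'. eqv a a' \<Longrightarrow> eqv (Q a) (Q a')"
  shows "eqv a a' \<Longrightarrow> eqv ((Q ^^ k) a) ((Q ^^ k) a')"
proof (induction k)
  case 0 then show ?case by simp
next
  case (Suc k) then show ?case using congQ by simp
qed

lemma S1:
  fixes Q :: "('f,'p) fm \<Rightarrow> ('f,'p) fm" and op :: "('f,'p) fm \<Rightarrow> ('f,'p) fm \<Rightarrow> ('f,'p) fm"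
  assumes prenex: "\<And>a c. eqv (op (Q a) c) (Q (op a (liftf 0 c)))"
  and congQ: "\<And>a a'. eqv a a' \<Longrightarrow> eqv (Q a) (Q a')"
  and congop: "\<And>a a' c. eqv a a' \<Longrightarrow> eqv (op a c) (op a' c)"
  shows "eqv (op ((Q ^^ k) a) c) ((Q ^^ k) (op a ((liftf 0 ^^ k) c)))"
proof (induction k arbitrary: c)
  case 0 then show ?case by (simp add: equiv_refl)
next
  case (Suc k)
  have "eqv (op ((Q ^^ Suc k) a) c) (Q (op ((Q ^^ k) a) (liftf 0 c)))"
    using prenex by simp
  also have "eqv (Q (op ((Q ^^ k) a) (liftf 0 c))) (Q ((Q ^^ k) (op a ((liftf 0 ^^ k) (liftf 0 c)))))"
    using Suc congQ by blast
  finally have *: "eqv (op ((Q ^^ Suc k) a) c) (Q ((Q ^^ k) (op a ((liftf 0 ^^ k) (liftf 0 c)))))" .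
  have e: "(liftf 0 ^^ Suc k) c = (liftf 0 ^^ k) (liftf 0 c)" by (simp add: funpow_swap1)
  show ?case unfolding e using * by simp
qed

lemma S2:
  fixes Q :: "('f,'p) fm \<Rightarrow> ('f,'p) fm" and op :: "('f,'p) fm \<Rightarrow> ('f,'p) fm \<Rightarrow> ('f,'p) fm"
  assumes prenex: "\<And>a c. eqv (op (Q a) c) (Q (op a (liftf 0 c)))"
  and congQ: "\<And>a a'. eqv a a' \<Longrightarrow> eqv (Q a) (Q a')"
  and congop: "\<And>a a' c. eqv a a' \<Longrightarrow> eqv (op a c) (op a' c)"
  and comm: "\<And>a c. eqv (op a c) (op c a)"
  shows "eqv (op a ((Q ^^ k) c)) ((Q ^^ k) (op ((liftf 0 ^^ k) a) c))"
proof -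
  have "eqv (op a ((Q ^^ k) c)) (op ((Q ^^ k) c) a)" by (rule comm)
  also have "eqv \<dots> ((Q ^^ k) (op c ((liftf 0 ^^ k) a)))" by (rule S1[where op=op and Q=Q, OF prenex congQ congop])
  also have "eqv \<dots> ((Q ^^ k) (op ((liftf 0 ^^ k) a) c))" by (rule congQk[OF congQ comm])
  finally show ?thesis .
qed




lemma combine:
  fixes Q :: "('f,'p) fm \<Rightarrow> ('f,'p) fm" and op :: "('f,'p) fm \<Rightarrow> ('f,'p) fm \<Rightarrow> ('f,'p) fm"
  assumes prenex: "\<And>a c. eqv (op (Q a) c) (Q (op a (liftf 0 c)))"
  and congQ: "\<And>a a'. eqv a a' \<Longrightarrow> eqv (Q a) (Q a')"
  and congop: "\<And>a a' c. eqv a a' \<Longrightarrow> eqv (op a c) (op a' c)"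
  and comm: "\<And>a c. eqv (op a c) (op c a)"
  and cQk: "\<And>j k a. closedf j ((Q ^^ k) a) = closedf (j + k) a"
  and cop: "\<And>j a c. closedf j (op a c) = (closedf j a \<and> closedf j c)"
  and R_def: "\<And>x. R x \<longleftrightarrow> (\<exists>k c. x = (Q ^^ k) c \<and> P c)"
  and Rl: "\<And>x k. R x \<Longrightarrow> R ((liftf 0 ^^ k) x)"
  and Pl: "\<And>x k. P x \<Longrightarrow> P ((liftf 0 ^^ k) x)"
  and IH: "\<And>x y. P x \<Longrightarrow> P y \<Longrightarrow> \<exists>z. P z \<and> eqv z (op x y) \<and> (\<forall>j. closedf j x \<longrightarrow> closedf j y \<longrightarrow> closedf j z)"
  and Rx: "R x" and Ry: "R y"
  shows "\<exists>z. R z \<and> eqv z (op x y) \<and> (\<forall>j. closedf j x \<longrightarrow> closedf j y \<longrightarrow> closedf j z)"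
proof -
  obtain k x' where x: "x = (Q ^^ k) x'" "P x'" using Rx R_def by blast
  define Y1 where "Y1 = (liftf 0 ^^ k) y"
  have "R Y1" using Rl Ry Y1_def by blast
  then obtain m y1 where y1: "Y1 = (Q ^^ m) y1" "P y1" using R_def by blast
  obtain z where z: "P z" "eqv z (op ((liftf 0 ^^ m) x') y1)"
    "\<forall>j. closedf j ((liftf 0 ^^ m) x') \<longrightarrow> closedf j y1 \<longrightarrow> closedf j z"
    using IH[OF Pl[OF x(2)] y1(2)] by blast
  have QQ: "(Q ^^ (k + m)) z = (Q ^^ k) ((Q ^^ m) z)" by (simp add: funpow_add)
  have "R ((Q ^^ (k + m)) z)" using R_def z(1) by blast
  moreover have "eqv ((Q ^^ (k + m)) z) (op x y)"
  proof -
    have "eqv (op x y) ((Q ^^ k) (op x' Y1))" unfolding x(1) Y1_def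
      by (rule S1[where op=op and Q=Q, OF prenex congQ congop])
    also have "eqv \<dots> ((Q ^^ k) ((Q ^^ m) (op ((liftf 0 ^^ m) x') y1)))"
    proof -
      have "eqv (op x' Y1) ((Q ^^ m) (op ((liftf 0 ^^ m) x') y1))"
        unfolding y1(1) by (rule S2[where op=op and Q=Q, OF prenex congQ congop comm])
      then show ?thesis using congQk[of Q, OF congQ] by blast
    qed
    also have "eqv \<dots> ((Q ^^ k) ((Q ^^ m) z))"
      using congQk[of Q, OF congQ] equiv_sym[OF z(2)] by blast
    finally show ?thesis unfolding QQ by (rule equiv_sym)
  qed
  moreover have "closedf j ((Q ^^ (k + m)) z)" if "closedf j x" "closedf j y" for j
  proof -
    have "closedf (j + k) x'" using that(1) x(1) cQk by simp
    have "closedf (j + k) Y1" unfolding Y1_def using closedf_liftk that(2) .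
    then have "closedf (j + k + m) y1" using y1(1) cQk by simp
    moreover have "closedf (j + k + m) ((liftf 0 ^^ m) x')" using closedf_liftk \<open>closedf (j + k) x'\<close> .
    ultimately have "closedf (j + k + m) z" using z(3) by blast
    then show ?thesis using cQk by (simp add: add.assoc)
  qed
  ultimately show ?thesis by blast
qed

lemma closure:
  "\<forall>b (x::('f,'p) fm) y. level b n x \<longrightarrow> level b n y \<longrightarrow>
     (\<exists>z. level b n z \<and> eqv z (Conj x y) \<and> (\<forall>j. closedf j x \<longrightarrow> closedf j y \<longrightarrow> closedf j z)) \<and>
     (\<exists>z. level b n z \<and> eqv z (Disj x y) \<and> (\<forall>j. closedf j x \<longrightarrow> closedf j y \<longrightarrow> closedf j z))"
proof (induction n)
  case 0 show ?case
  proof (intro allI impI conjI)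
    fix b and x y :: "('f,'p) fm"
    assume "level b 0 x" "level b 0 y"
    then show "\<exists>z. level b 0 z \<and> eqv z (Conj x y) \<and> (\<forall>j. closedf j x \<longrightarrow> closedf j y \<longrightarrow> closedf j z)"
      by (auto intro!: exI[of _ "Conj x y"] equiv_refl)
    from \<open>level b 0 x\<close> \<open>level b 0 y\<close> show "\<exists>z. level b 0 z \<and> eqv z (Disj x y) \<and> (\<forall>j. closedf j x \<longrightarrow> closedf j y \<longrightarrow> closedf j z)"
      by (auto intro!: exI[of _ "Disj x y"] equiv_refl)
  qed
next
  case (Suc n)
  show ?case
  proof (intro allI impI)
    have cC: "\<And>j a c. closedf j (Conj a c) = (closedf j a \<and> closedf j c)"
      and cD: "\<And>j a c. closedf j (Disj a c) = (closedf j a \<and> closedf j c)" by simp_all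
    have IHc: "\<And>b (x::('f,'p) fm) y. level b n x \<Longrightarrow> level b n y \<Longrightarrow> \<exists>z. level b n z \<and> eqv z (Conj x y) \<and> (\<forall>j. closedf j x \<longrightarrow> closedf j y \<longrightarrow> closedf j z)"
      using Suc.IH by blast
    have IHd: "\<And>b (x::('f,'p) fm) y. level b n x \<Longrightarrow> level b n y \<Longrightarrow> \<exists>z. level b n z \<and> eqv z (Disj x y) \<and> (\<forall>j. closedf j x \<longrightarrow> closedf j y \<longrightarrow> closedf j z)"
      using Suc.IH by blast+
    fix b and x y :: "('f,'p) fm"
    assume lx: "level b (Suc n) x" and ly: "level b (Suc n) y"
    show "(\<exists>z. level b (Suc n) z \<and> eqv z (Conj x y) \<and> (\<forall>j. closedf j x \<longrightarrow> closedf j y \<longrightarrow> closedf j z)) \<and>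
     (\<exists>z. level b (Suc n) z \<and> eqv z (Disj x y) \<and> (\<forall>j. closedf j x \<longrightarrow> closedf j y \<longrightarrow> closedf j z))"
    proof (cases b)
      case True
      have R: "\<And>x. level b (Suc n) x \<longleftrightarrow> (\<exists>k c. x = (Ex ^^ k) c \<and> level False n c)" using True by simp
      have Rl: "\<And>x k. level b (Suc n) x \<Longrightarrow> level b (Suc n) ((liftf 0 ^^ k) x)" by (rule level_liftk)
      have Pl: "\<And>x k. level False n x \<Longrightarrow> level False n ((liftf 0 ^^ k) x)" by (rule level_liftk)
      show ?thesis
      proof
        show "\<exists>z. level b (Suc n) z \<and> eqv z (Conj x y) \<and> (\<forall>j. closedf j x \<longrightarrow> closedf j y \<longrightarrow> closedf j z)"
          by (rule combine[where Q=Ex and op=Conj and P="level False n", OF P1 cong_Ex cong_Conj comm_Conj closed_Exk _ R Rl Pl _ lx ly])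
            (assumption | fact cC cD IHc IHd)+
        show "\<exists>z. level b (Suc n) z \<and> eqv z (Disj x y) \<and> (\<forall>j. closedf j x \<longrightarrow> closedf j y \<longrightarrow> closedf j z)"
          by (rule combine[where Q=Ex and op=Disj and P="level False n", OF P2 cong_Ex cong_Disj comm_Disj closed_Exk _ R Rl Pl _ lx ly])
            (assumption | fact cC cD IHc IHd)+
      qed
    next
      case False
      have R: "\<And>x. level b (Suc n) x \<longleftrightarrow> (\<exists>k c. x = (All ^^ k) c \<and> level True n c)" using False by simp
      have Rl: "\<And>x k. level b (Suc n) x \<Longrightarrow> level b (Suc n) ((liftf 0 ^^ k) x)" by (rule level_liftk)
      have Pl: "\<And>x k. level True n x \<Longrightarrow> level True n ((liftf 0 ^^ k) x)" by (rule level_liftk)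
      show ?thesis
      proof
        show "\<exists>z. level b (Suc n) z \<and> eqv z (Conj x y) \<and> (\<forall>j. closedf j x \<longrightarrow> closedf j y \<longrightarrow> closedf j z)"
          by (rule combine[where Q=All and op=Conj and P="level True n", OF P3 cong_All cong_Conj comm_Conj closed_Allk _ R Rl Pl _ lx ly])
            (assumption | fact cC cD IHc IHd)+
        show "\<exists>z. level b (Suc n) z \<and> eqv z (Disj x y) \<and> (\<forall>j. closedf j x \<longrightarrow> closedf j y \<longrightarrow> closedf j z)"
          by (rule combine[where Q=All and op=Disj and P="level True n", OF P4 cong_All cong_Disj comm_Disj closed_Allk _ R Rl Pl _ lx ly])
            (assumption | fact cC cD IHc IHd)+
      qed
    qed
  qed
qed




lemma prvI: "set G \<subseteq> A \<Longrightarrow> nd G a \<Longrightarrow> A \<turnstile> a"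
  unfolding proves_def by blast
lemma prv_mono: "A \<turnstile> a \<Longrightarrow> A \<subseteq> B \<Longrightarrow> B \<turnstile> a"
  unfolding proves_def by blast
lemma prv_assum: "a \<in> A \<Longrightarrow> A \<turnstile> a"
  by (rule prvI[of "[a]"]) (auto intro: AssumH)
lemma prv_mp1: "A \<turnstile> a \<Longrightarrow> (\<And>H. nd H a \<Longrightarrow> nd H c) \<Longrightarrow> A \<turnstile> c"
  unfolding proves_def by blast
lemma prv_mp2: "A \<turnstile> a \<Longrightarrow> A \<turnstile> b \<Longrightarrow> (\<And>H. nd H a \<Longrightarrow> nd H b \<Longrightarrow> nd H c) \<Longrightarrow> A \<turnstile> c"
proof -
  assume "A \<turnstile> a" "A \<turnstile> b" and r: "\<And>H. nd H a \<Longrightarrow> nd H b \<Longrightarrow> nd H c"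
  then obtain G1 G2 where "set G1 \<subseteq> A" "nd G1 a" "set G2 \<subseteq> A" "nd G2 b" unfolding proves_def by blast
  then have "nd (G1 @ G2) a" "nd (G2 @ G1) b" by (auto elim: weaken)
  then have "nd (G1 @ G2) b" by (auto elim: weaken)
  then have "nd (G1 @ G2) c" using r \<open>nd (G1 @ G2) a\<close> by blast
  then show "A \<turnstile> c" using \<open>set G1 \<subseteq> A\<close> \<open>set G2 \<subseteq> A\<close> prvI[of "G1 @ G2" A c] by auto
qed

lemma prv_insert_list:
  assumes "insert x A \<turnstile> y"
  obtains G where "set G \<subseteq> A" "nd (x # G) y"
proof -
  from assms obtain G where G: "set G \<subseteq> insert x A" "nd G y" unfolding proves_def by blast
  let ?G = "filter (\<lambda>g. g \<noteq> x) G"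
  have "nd (x # ?G) y" using G(2) by (rule weaken) auto
  moreover have "set ?G \<subseteq> A" using G(1) by auto
  ultimately show thesis using that by blast
qed

lemma prv_negI: "insert x A \<turnstile> Bot \<Longrightarrow> A \<turnstile> Neg x"
  by (erule prv_insert_list) (auto intro: prvI NegI)
lemma prv_classical: "insert (Neg x) A \<turnstile> Bot \<Longrightarrow> A \<turnstile> x"
  by (erule prv_insert_list) (auto intro: prvI Classical)
lemma prv_impI: "insert x A \<turnstile> y \<Longrightarrow> A \<turnstile> Imp x y"
  by (erule prv_insert_list) (auto intro: prvI ImpI)
lemma prv_contra: "A \<turnstile> a \<Longrightarrow> A \<turnstile> Neg a \<Longrightarrow> A \<turnstile> Bot"
  by (rule prv_mp2[of A "Neg a" a]) (auto intro: NegE)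

lemma filter_cut:
  assumes "nd G a" "\<forall>g\<in>set G. g \<notin> X \<longrightarrow> nd [\<chi>] g"
  shows "insert \<chi> X \<turnstile> a"
proof -
  let ?H = "\<chi> # filter (\<lambda>g. g \<in> X) G"
  have "\<forall>g\<in>set G. nd ?H g"
  proof
    fix g assume g: "g \<in> set G"
    show "nd ?H g"
    proof (cases "g \<in> X")
      case True then show ?thesis using g by (auto intro: Assum)
    next
      case False then have "nd [\<chi>] g" using g assms(2) by blast
      then show ?thesis using AssumH[of \<chi>] by (rule cut1)
    qed
  qed
  then have "nd ?H a" using assms(1) cut_all by blast
  then show ?thesis by (rule prvI[rotated]) auto
qed

lemma Lindenbaum:
  fixes X :: "('f,'p) fm set"
  assumes "is_theory X" "consistent X"
  shows "\<exists>M. complete_consistent_theory M \<and> X \<subseteq> M"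
proof -
  let ?F = "{Y. X \<subseteq> Y \<and> is_theory Y \<and> consistent Y}"
  have "\<exists>M\<in>?F. \<forall>Y\<in>?F. M \<subseteq> Y \<longrightarrow> Y = M"
  proof (rule subset_Zorn_nonempty)
    show "?F \<noteq> {}" using assms by blast
    fix C assume C: "C \<noteq> {}" "subset.chain ?F C"
    have sub: "C \<subseteq> ?F" using C(2) by (simp add: subset_chain_def)
    have "X \<subseteq> \<Union>C" using C sub by blast
    moreover have "is_theory (\<Union>C)" using sub unfolding is_theory_def by blast
    moreover have "consistent (\<Union>C)" unfolding consistent_def
    proof
      assume "\<Union>C \<turnstile> Bot"
      then obtain G where G: "set G \<subseteq> \<Union>C" "nd G Bot" unfolding proves_def by blast
      obtain B where "B \<in> C" "set G \<subseteq> B"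
        using finite_subset_Union_chain[OF _ G(1) C(1) C(2)] by blast
      then have "B \<turnstile> Bot" using G(2) by (auto intro: prvI)
      then show False using sub \<open>B \<in> C\<close> unfolding consistent_def by blast
    qed
    ultimately show "\<Union>C \<in> ?F" by blast
  qed
  then obtain M where M: "M \<in> ?F" and max: "\<forall>Y\<in>?F. M \<subseteq> Y \<longrightarrow> Y = M" by blast
  have thM: "is_theory M" and cM: "consistent M" and XM: "X \<subseteq> M" using M by auto
  have closed: "a \<in> M" if "sentence a" "M \<turnstile> a" for a
  proof -
    have "consistent (insert a M)" unfolding consistent_def
    proof
      assume "insert a M \<turnstile> Bot"
      then have "M \<turnstile> Neg a" by (rule prv_negI)
      then have "M \<turnstile> Bot" using that(2) prv_contra by blast
      then show False using cM unfolding consistent_def by blast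
    qed
    then have "insert a M \<in> ?F" using M that(1) unfolding is_theory_def by auto
    then show ?thesis using max by blast
  qed
  have "complete_consistent_theory M"
    unfolding complete_consistent_theory_def
  proof (intro conjI allI impI)
    show "is_theory M" "consistent M" by fact+
    show "ded_closure M = M"
      unfolding ded_closure_def using closed thM prv_assum unfolding is_theory_def by blast
    fix a :: "('f,'p) fm" assume sa: "sentence a"
    show "a \<in> M \<or> Neg a \<in> M"
    proof (cases "a \<in> M")
      case True then show ?thesis ..
    next
      case False
      then have "a \<notin> M" .
      then have "insert a M \<notin> ?F" using max by blast
      then have "\<not> consistent (insert a M)" using M sa unfolding is_theory_def by auto
      then have "M \<turnstile> Neg a" unfolding consistent_def by (auto intro: prv_negI)
      then show ?thesis using closed sa by (simp add: sentence_def)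
    qed
  qed
  then show ?thesis using XM by blast
qed




lemma lvl_conj:
  fixes x y :: "('f,'p) fm"
  assumes "x \<in> level_sentences b n" "y \<in> level_sentences b n"
  shows "\<exists>z\<in>level_sentences b n. eqv z (Conj x y)"
  using closure[of n] assms unfolding level_sentences_def sentence_def by blast

lemma lvl_disj:
  fixes x y :: "('f,'p) fm"
  assumes "x \<in> level_sentences b n" "y \<in> level_sentences b n"
  shows "\<exists>z\<in>level_sentences b n. eqv z (Disj x y)"
  using closure[of n] assms unfolding level_sentences_def sentence_def by blast

lemma Bot_lvl: "Bot \<in> level_sentences b n"
  unfolding level_sentences_def sentence_def by (auto intro: qfree_level)
lemma NegBot_lvl: "Neg Bot \<in> level_sentences b n"
  unfolding level_sentences_def sentence_def by (auto intro: qfree_level)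

lemma nd_NegBot: "nd G (Neg Bot)" by (rule NegI, rule AssumH)

lemma conj_collect:
  fixes C :: "('f,'p) fm list"
  assumes "\<forall>c\<in>set C. c \<in> level_sentences b n \<and> Y \<turnstile> c"
  shows "\<exists>\<chi>\<in>level_sentences b n. Y \<turnstile> \<chi> \<and> (\<forall>c\<in>set C. nd [\<chi>] c)"
  using assms
proof (induction C)
  case Nil
  have "Y \<turnstile> Neg Bot" by (rule prvI[of "[]"]) (auto intro: nd_NegBot)
  then show ?case using NegBot_lvl by auto
next
  case (Cons c C)
  then obtain \<chi>' where ch': "\<chi>' \<in> level_sentences b n" "Y \<turnstile> \<chi>'" "\<forall>d\<in>set C. nd [\<chi>'] d" by auto
  have c: "c \<in> level_sentences b n" "Y \<turnstile> c" using Cons.prems by auto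
  obtain \<chi> where ch: "\<chi> \<in> level_sentences b n" "eqv \<chi> (Conj c \<chi>')" using lvl_conj[OF c(1) ch'(1)] by blast
  have "Y \<turnstile> Conj c \<chi>'" using c(2) ch'(2) by (rule prv_mp2) (rule ConjI)
  then have "Y \<turnstile> \<chi>" by (rule prv_mp1) (rule equivD[OF equiv_sym[OF ch(2)]])
  moreover have cc: "nd [\<chi>] (Conj c \<chi>')" using equivD[OF ch(2) AssumH] .
  have "nd [\<chi>] c" using ConjE1[OF cc] .
  moreover have "nd [\<chi>] d" if "d \<in> set C" for d
    using ch'(3) that ConjE2[OF cc] cut1 by blast
  ultimately show ?case using ch(1) by auto
qed

lemma nd_negdisj:
  assumes "nd H (Neg a)" "nd H (Neg b)" shows "nd H (Neg (Disj a b))"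
proof (rule NegI)
  show "nd (Disj a b # H) Bot"
  proof (rule DisjE[OF AssumH])
    show "nd (a # Disj a b # H) Bot"
      by (rule NegE[of _ a], rule weaken[OF assms(1)], auto intro: AssumH)
    show "nd (b # Disj a b # H) Bot"
      by (rule NegE[of _ b], rule weaken[OF assms(2)], auto intro: AssumH)
  qed
qed

lemma nd_negdisj1: "nd H (Neg (Disj a b)) \<Longrightarrow> nd H (Neg a)"
  by (rule NegI, rule NegE[of _ "Disj a b"], rule weaken, assumption, auto intro: DisjI1 AssumH)
lemma nd_negdisj2: "nd H (Neg (Disj a b)) \<Longrightarrow> nd H (Neg b)"
  by (rule NegI, rule NegE[of _ "Disj a b"], rule weaken, assumption, auto intro: DisjI2 AssumH)

lemma disj_collect:
  fixes D :: "('f,'p) fm list"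
  assumes "\<forall>d\<in>set D. \<exists>\<psi>\<in>level_sentences b n. d = Neg \<psi> \<and> Y \<turnstile> d"
  shows "\<exists>\<chi>\<in>level_sentences b n. Y \<turnstile> Neg \<chi> \<and> (\<forall>d\<in>set D. nd [Neg \<chi>] d)"
  using assms
proof (induction D)
  case Nil
  have "Y \<turnstile> Neg Bot" by (rule prvI[of "[]"]) (auto intro: nd_NegBot)
  then show ?case using Bot_lvl by auto
next
  case (Cons d D)
  then obtain \<chi>' where ch': "\<chi>' \<in> level_sentences b n" "Y \<turnstile> Neg \<chi>'" "\<forall>e\<in>set D. nd [Neg \<chi>'] e" by auto
  obtain \<psi> where p: "\<psi> \<in> level_sentences b n" "d = Neg \<psi>" "Y \<turnstile> Neg \<psi>" using Cons.prems by auto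
  obtain \<chi> where ch: "\<chi> \<in> level_sentences b n" "eqv \<chi> (Disj \<psi> \<chi>')" using lvl_disj[OF p(1) ch'(1)] by blast
  have e: "eqv (Neg \<chi>) (Neg (Disj \<psi> \<chi>'))" using cong_Neg[OF ch(2)] .
  have "Y \<turnstile> Neg (Disj \<psi> \<chi>')" using p(3) ch'(2) by (rule prv_mp2) (rule nd_negdisj)
  then have "Y \<turnstile> Neg \<chi>" by (rule prv_mp1) (rule equivD[OF equiv_sym[OF e]])
  moreover have cc: "nd [Neg \<chi>] (Neg (Disj \<psi> \<chi>'))" using equivD[OF e AssumH] .
  have "nd [Neg \<chi>] d" using nd_negdisj1[OF cc] p(2) by simp
  moreover have "nd [Neg \<chi>] e" if "e \<in> set D" for e
    using ch'(3) that nd_negdisj2[OF cc] cut1 by blast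
  ultimately show ?case using ch(1) by auto
qed




lemma part2:
  fixes b :: bool and n :: nat and A T :: "('f,'p) fm set" and \<phi> :: "('f,'p) fm"
  defines "\<Lambda> \<equiv> level_sentences b n"
  assumes thA: "is_theory A" and sphi: "sentence \<phi>" and thT: "is_theory T"
    and cons: "consistent (T \<union> A \<union> {\<phi>} \<union> Th \<Lambda> (A \<union> {Neg \<phi>}))"
  shows "\<exists>Tp Tm. complete_consistent_theory Tp \<and> A \<union> {\<phi>} \<subseteq> Tp \<and> T \<subseteq> Tp \<and>
                 complete_consistent_theory Tm \<and> A \<union> {Neg \<phi>} \<subseteq> Tm \<and>
                 \<Lambda> \<inter> Tm \<subseteq> \<Lambda> \<inter> Tp"
proof -
  define S where "S = T \<union> A \<union> {\<phi>}"
  define X0 where "X0 = A \<union> {Neg \<phi>}"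
  define \<Delta> where "\<Delta> = {d. \<exists>\<psi>\<in>\<Lambda>. d = Neg \<psi> \<and> S \<turnstile> d}"
  have sent\<Lambda>: "sentence c" if "c \<in> \<Lambda>" for c using that unfolding \<Lambda>_def level_sentences_def by auto
  have c1: "consistent (X0 \<union> \<Delta>)" unfolding consistent_def
  proof
    assume "X0 \<union> \<Delta> \<turnstile> Bot"
    then obtain G where G: "set G \<subseteq> X0 \<union> \<Delta>" "nd G Bot" unfolding proves_def by blast
    let ?D = "filter (\<lambda>g. g \<notin> X0) G"
    have "\<forall>d\<in>set ?D. \<exists>\<psi>\<in>level_sentences b n. d = Neg \<psi> \<and> S \<turnstile> d"
      using G(1) unfolding \<Delta>_def \<Lambda>_def by auto
    then obtain \<chi> where ch: "\<chi> \<in> \<Lambda>" "S \<turnstile> Neg \<chi>" "\<forall>d\<in>set ?D. nd [Neg \<chi>] d"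
      using disj_collect unfolding \<Lambda>_def by blast
    have "insert (Neg \<chi>) X0 \<turnstile> Bot" using G(2) by (rule filter_cut) (use ch(3) in auto)
    then have "X0 \<turnstile> \<chi>" by (rule prv_classical)
    then have "\<chi> \<in> Th \<Lambda> X0" using ch(1) sent\<Lambda> unfolding Th_def ded_closure_def by auto
    then have "S \<union> Th \<Lambda> X0 \<turnstile> \<chi>" by (auto intro: prv_assum)
    moreover have "S \<union> Th \<Lambda> X0 \<turnstile> Neg \<chi>" using ch(2) by (rule prv_mono) auto
    ultimately have "S \<union> Th \<Lambda> X0 \<turnstile> Bot" by (rule prv_contra)
    then show False using cons unfolding consistent_def S_def X0_def by simp
  qed
  have th1: "is_theory (X0 \<union> \<Delta>)"
    using thA sphi sent\<Lambda> unfolding is_theory_def X0_def \<Delta>_def by (auto simp: sentence_def)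
  obtain M where M: "complete_consistent_theory M" "X0 \<union> \<Delta> \<subseteq> M"
    using Lindenbaum[OF th1 c1] by blast
  have thM: "is_theory M" and cM: "consistent M" using M(1) unfolding complete_consistent_theory_def by auto
  have c2: "consistent (S \<union> (\<Lambda> \<inter> M))" unfolding consistent_def
  proof
    assume "S \<union> (\<Lambda> \<inter> M) \<turnstile> Bot"
    then obtain G where G: "set G \<subseteq> S \<union> (\<Lambda> \<inter> M)" "nd G Bot" unfolding proves_def by blast
    let ?C = "filter (\<lambda>g. g \<notin> S) G"
    have "\<forall>c\<in>set ?C. c \<in> level_sentences b n \<and> M \<turnstile> c"
      using G(1) unfolding \<Lambda>_def by (auto intro: prv_assum)
    then obtain \<chi> where ch: "\<chi> \<in> \<Lambda>" "M \<turnstile> \<chi>" "\<forall>c\<in>set ?C. nd [\<chi>] c"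
      using conj_collect unfolding \<Lambda>_def by blast
    have "insert \<chi> S \<turnstile> Bot" using G(2) by (rule filter_cut) (use ch(3) in auto)
    then have "S \<turnstile> Neg \<chi>" by (rule prv_negI)
    then have "Neg \<chi> \<in> \<Delta>" using ch(1) unfolding \<Delta>_def by blast
    then have "M \<turnstile> Neg \<chi>" using M(2) by (auto intro: prv_assum)
    with ch(2) have "M \<turnstile> Bot" by (rule prv_contra)
    then show False using cM unfolding consistent_def by simp
  qed
  have th2: "is_theory (S \<union> (\<Lambda> \<inter> M))"
    using thA sphi thT thM unfolding is_theory_def S_def by auto
  obtain Tp where Tp: "complete_consistent_theory Tp" "S \<union> (\<Lambda> \<inter> M) \<subseteq> Tp"
    using Lindenbaum[OF th2 c2] by blast
  show ?thesis
    apply (rule exI[of _ Tp], rule exI[of _ M])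
    using Tp M unfolding S_def X0_def by auto
qed

theorem lemma4p5:
  fixes b :: bool and n :: nat
    and A :: "('f, 'p) fm set" and \<phi> :: "('f, 'p) fm"
  defines "\<Lambda> \<equiv> level_sentences b n"
  assumes "is_theory A"
    and "sentence \<phi>"
    and "\<forall>\<psi>\<in>neg_set \<Lambda>. \<not> A \<turnstile> Iff \<phi> \<psi>"
  shows "(\<exists>Tp Tm. complete_consistent_theory Tp \<and> A \<union> {\<phi>} \<subseteq> Tp \<and>
                 complete_consistent_theory Tm \<and> A \<union> {Neg \<phi>} \<subseteq> Tm \<and>
                 \<Lambda> \<inter> Tm \<subseteq> \<Lambda> \<inter> Tp)
       \<and> (\<forall>T. is_theory T \<longrightarrow> consistent (T \<union> A \<union> {\<phi>} \<union> Th \<Lambda> (A \<union> {Neg \<phi>})) \<longrightarrow>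
            (\<exists>Tp Tm. complete_consistent_theory Tp \<and> A \<union> {\<phi>} \<subseteq> Tp \<and> T \<subseteq> Tp \<and>
                 complete_consistent_theory Tm \<and> A \<union> {Neg \<phi>} \<subseteq> Tm \<and>
                 \<Lambda> \<inter> Tm \<subseteq> \<Lambda> \<inter> Tp))"
proof
  show P2: "\<forall>T. is_theory T \<longrightarrow> consistent (T \<union> A \<union> {\<phi>} \<union> Th \<Lambda> (A \<union> {Neg \<phi>})) \<longrightarrow>
            (\<exists>Tp Tm. complete_consistent_theory Tp \<and> A \<union> {\<phi>} \<subseteq> Tp \<and> T \<subseteq> Tp \<and>
                 complete_consistent_theory Tm \<and> A \<union> {Neg \<phi>} \<subseteq> Tm \<and>
                 \<Lambda> \<inter> Tm \<subseteq> \<Lambda> \<inter> Tp)"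
    using part2[OF assms(2,3)] unfolding \<Lambda>_def by blast
  have sent\<Lambda>: "sentence c" if "c \<in> \<Lambda>" for c using that unfolding \<Lambda>_def level_sentences_def by auto
  have cons: "consistent ({} \<union> A \<union> {\<phi>} \<union> Th \<Lambda> (A \<union> {Neg \<phi>}))" unfolding consistent_def
  proof
    define S where "S = A \<union> {\<phi>}"
    define X0 where "X0 = A \<union> {Neg \<phi>}"
    assume "{} \<union> A \<union> {\<phi>} \<union> Th \<Lambda> (A \<union> {Neg \<phi>}) \<turnstile> Bot"
    then obtain G where G: "set G \<subseteq> S \<union> Th \<Lambda> X0" "nd G Bot" unfolding proves_def S_def X0_def by auto
    let ?C = "filter (\<lambda>g. g \<notin> S) G"
    have "\<forall>c\<in>set ?C. c \<in> level_sentences b n \<and> X0 \<turnstile> c"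
      using G(1) unfolding \<Lambda>_def Th_def ded_closure_def by auto
    then obtain \<chi> where ch: "\<chi> \<in> \<Lambda>" "X0 \<turnstile> \<chi>" "\<forall>c\<in>set ?C. nd [\<chi>] c"
      using conj_collect unfolding \<Lambda>_def by blast
    have "insert \<chi> S \<turnstile> Bot" using G(2) by (rule filter_cut) (use ch(3) in auto)
    then have sn: "S \<turnstile> Neg \<chi>" by (rule prv_negI)
    have i1: "A \<turnstile> Imp \<phi> (Neg \<chi>)" using sn unfolding S_def by (intro prv_impI) simp
    have "insert (Neg \<phi>) (insert (Neg \<chi>) A) \<turnstile> Bot"
    proof (rule prv_contra)
      show "insert (Neg \<phi>) (insert (Neg \<chi>) A) \<turnstile> \<chi>" using ch(2) unfolding X0_def by (rule prv_mono) auto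
      show "insert (Neg \<phi>) (insert (Neg \<chi>) A) \<turnstile> Neg \<chi>" by (rule prv_assum) simp
    qed
    then have "insert (Neg \<chi>) A \<turnstile> \<phi>" by (rule prv_classical)
    then have i2: "A \<turnstile> Imp (Neg \<chi>) \<phi>" by (rule prv_impI)
    have "A \<turnstile> Iff \<phi> (Neg \<chi>)" unfolding Iff_def using i1 i2 by (rule prv_mp2) (rule ConjI)
    moreover have "Neg \<chi> \<in> neg_set \<Lambda>"
    proof -
      have "{} \<turnstile> Iff (Neg \<chi>) (Neg \<chi>)" unfolding Iff_def
        by (rule prvI[of "[]"]) (auto intro!: ConjI ImpI AssumH)
      then show ?thesis using ch(1) sent\<Lambda> unfolding neg_set_def by (auto simp: sentence_def)
    qed
    ultimately show False using assms(4) by blast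
  qed
  have "is_theory ({} :: ('f,'p) fm set)" unfolding is_theory_def by simp
  then show "\<exists>Tp Tm. complete_consistent_theory Tp \<and> A \<union> {\<phi>} \<subseteq> Tp \<and>
                 complete_consistent_theory Tm \<and> A \<union> {Neg \<phi>} \<subseteq> Tm \<and>
                 \<Lambda> \<inter> Tm \<subseteq> \<Lambda> \<inter> Tp"
    using P2 cons by blast
qed


end
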